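(* Let $r \in \mathbb{Z}_{\geqslant 2}$. For any real number $x \geqslant 1$, $$\sum_{n_1 \leqslant x, \dotsc, n_r \leqslant x} \mu \left( n_1 \dotsb n_r \right) \left \lfloor \frac{x}{n_1 \dotsb n_r} \right \rfloor = \sum_{n \leqslant x} (1-r)^{\omega(n)},$$ where the sum on the left runs over all $r$-tuples of positive integers $n_1,\dots,n_r \leqslant x$.
   Context: $\mu$ is the Möbius function, $\omega(n)$ is the number of distinct prime factors of $n$ (with $\omega(1)=0$), and $\lfloor \cdot \rfloor$ is the integer part. *)

theory Defs
  imports "HOL-Computational_Algebra.Computational_Algebra" "HOL-Library.FuncSet"
begin

definition omega :: "nat \<Rightarrow> nat" where
  "omega n = card (prime_factors n)"

definition moebius :: "nat \<Rightarrow> int" where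
  "moebius n = (if squarefree n then (-1) ^ omega n else 0)"

end

theory Submission
  imports Defs
begin


lemma card_multiples:
  assumes "m \<ge> (1::nat)"
  shows "card {k\<in>{1..N}. m dvd k} = N div m"
proof -
  have "{k\<in>{1..N}. m dvd k} = (\<lambda>j. m*j) ` {1..N div m}"
  proof (rule set_eqI, rule iffI)
    fix k assume "k \<in> {k\<in>{1..N}. m dvd k}"
    then obtain j where j: "k = m*j" "1 \<le> k" "k \<le> N" by auto
    then have "j \<ge> 1" by (cases j) auto
    moreover have "j \<le> N div m" using j assms
      by (metis div_le_mono nonzero_mult_div_cancel_left not_one_le_zero)
    ultimately show "k \<in> (\<lambda>j. m*j) ` {1..N div m}" using j by auto
  next
    fix k assume "k \<in> (\<lambda>j. m*j) ` {1..N div m}"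
    then obtain j where j0: "j \<in> {1..N div m}" "k = m*j" by (rule imageE)
    then have j: "k = m*j" "1 \<le> j" "j \<le> N div m" by auto
    have "m * j \<le> m * (N div m)" using j by simp
    also have "\<dots> \<le> N" by simp
    finally show "k \<in> {k\<in>{1..N}. m dvd k}" using j assms by auto
  qed
  moreover have "inj_on (\<lambda>j. m*j) {1..N div m}" using assms by (auto simp: inj_on_def)
  ultimately show ?thesis by (simp add: card_image)
qed

lemma floor_div_nat:
  assumes "x \<ge> 0" "m \<ge> (1::nat)"
  shows "\<lfloor>x / real m\<rfloor> = int (nat \<lfloor>x\<rfloor> div m)"
proof -
  have "\<lfloor>x / real_of_int (int m)\<rfloor> = \<lfloor>x\<rfloor> div int m" by (rule floor_divide_real_eq_div) simp
  moreover have "\<lfloor>x\<rfloor> = int (nat \<lfloor>x\<rfloor>)" using assms by simp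
  ultimately show ?thesis by (metis of_int_of_nat_eq zdiv_int)
qed



lemma prime_dvd_prod_primes:
  fixes Q :: "nat set"
  assumes "finite Q" "\<forall>q\<in>Q. prime q" "prime p"
  shows "p dvd \<Prod>Q \<longleftrightarrow> p \<in> Q"
  using assms prime_dvd_prod_iff[of Q p id] primes_dvd_imp_eq by auto

lemma moebius_prod_primes:
  fixes Q :: "nat set"
  assumes "finite Q" "\<forall>q\<in>Q. prime q"
  shows "moebius (\<Prod>Q) = (-1) ^ card Q"
proof -
  have "0 \<notin> id ` Q" using assms by auto
  then have pf: "prime_factors (\<Prod>Q) = Q"
    using prime_factors_prod[of Q id] assms by (auto simp: prime_prime_factors)
  have "squarefree (\<Prod>Q)"
    using assms by (intro squarefree_prod_coprime) (auto simp: primes_coprime squarefree_prime)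
  then show ?thesis using pf by (simp add: moebius_def omega_def)
qed

lemma squarefree_prod_pf:
  fixes n :: nat
  assumes "squarefree n" "n > 0"
  shows "\<Prod>(prime_factors n) = n"
proof -
  have "(\<Prod>p \<in> prime_factors n. p ^ multiplicity p n) = n"
    using prod_prime_factors[of n] assms by simp
  moreover have "\<forall>p\<in>prime_factors n. multiplicity p n = 1"
    using assms squarefree_factorial_semiring'[of n] by simp
  ultimately show ?thesis by simp
qed

lemma unique_index:
  fixes ns :: "nat \<Rightarrow> nat"
  assumes "squarefree (\<Prod>i<r. ns i)" "i < r" "j < r" "i \<noteq> j" "prime p" "p dvd ns i" "p dvd ns j"
  shows False
proof -
  have "(\<Prod>i<r. ns i) = ns i * (\<Prod>l\<in>{..<r}-{i}. ns l)"
    using assms by (simp add: prod.remove)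
  also have "(\<Prod>l\<in>{..<r}-{i}. ns l) = ns j * (\<Prod>l\<in>{..<r}-{i}-{j}. ns l)"
    using assms by (subst prod.remove[of _ j]) auto
  finally have "ns i * ns j dvd (\<Prod>i<r. ns i)" by simp
  moreover have "p ^ 2 dvd ns i * ns j" using assms by (simp add: power2_eq_square mult_dvd_mono)
  ultimately have "p ^ 2 dvd (\<Prod>i<r. ns i)" using dvd_trans by blast
  then have "p dvd 1" using assms(1) squarefreeD by blast
  then show False using assms by simp
qed



lemma inner_sum:
  fixes r N k :: nat
  assumes k: "1 \<le> k" "k \<le> N"
  shows "(\<Sum>ns \<in> {ns \<in> Pi\<^sub>E {..<r} (\<lambda>_. {1..N}). (\<Prod>i<r. ns i) dvd k}. moebius (\<Prod>i<r. ns i))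
         = (1 - int r) ^ omega k"
proof -
  define P where "P = prime_factors k"
  have finP: "finite P" and primeP: "\<forall>p\<in>P. prime p" unfolding P_def by auto
  define \<psi> where "\<psi> g = (\<lambda>i\<in>{..<r}. \<Prod>{p\<in>P. g p = Suc i})" for g :: "nat \<Rightarrow> nat"
  define G where "G = Pi\<^sub>E P (\<lambda>_. {0..r})"
  define S where "S = {ns \<in> Pi\<^sub>E {..<r} (\<lambda>_. {1..N}). (\<Prod>i<r. ns i) dvd k \<and> squarefree (\<Prod>i<r. ns i)}"
  define w where "w j = (if j = 0 then 1 else - 1 :: int)" for j :: nat
  have dvd_psi: "p dvd \<psi> g i \<longleftrightarrow> g p = Suc i" if "p \<in> P" "i < r" for g p i
    using that finP primeP prime_dvd_prod_primes[of "{p\<in>P. g p = Suc i}" p] by (auto simp: \<psi>_def)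
  have PdvdK: "\<Prod>P dvd k"
  proof -
    have "(\<Prod>p\<in>P. p) dvd (\<Prod>p \<in> P. p ^ multiplicity p k)"
      unfolding P_def
      by (intro prod_dvd_prod) (simp add: prime_factors_multiplicity dvd_power)
    also have "\<dots> = k" using prod_prime_factors[of k] k unfolding P_def by simp
    finally show ?thesis .
  qed
  have prod_psi: "(\<Prod>i<r. \<psi> g i) = \<Prod>{p\<in>P. g p \<noteq> 0}" if "g \<in> G" for g
  proof -
    have "(\<Prod>i<r. \<psi> g i) = (\<Prod>i<r. \<Prod>p\<in>P. if g p = Suc i then p else 1)"
      by (simp add: \<psi>_def prod.inter_filter finP)
    also have "\<dots> = (\<Prod>p\<in>P. \<Prod>i<r. if g p = Suc i then p else 1)"
      by (rule prod.swap)
    also have "\<dots> = (\<Prod>p\<in>P. if g p \<noteq> 0 then p else 1)"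
    proof (rule prod.cong[OF refl])
      fix p assume p: "p \<in> P"
      then have "g p \<le> r" using that by (auto simp: G_def)
      show "(\<Prod>i<r. if g p = Suc i then p else 1) = (if g p \<noteq> 0 then p else 1)"
      proof (cases "g p")
        case 0 then show ?thesis by simp
      next
        case (Suc j)
        then have "j < r" using \<open>g p \<le> r\<close> by simp
        then show ?thesis using Suc by (simp add: prod.delta)
      qed
    qed
    also have "\<dots> = \<Prod>{p\<in>P. g p \<noteq> 0}"
      by (simp add: prod.inter_filter finP)
    finally show ?thesis .
  qed
  have bij: "bij_betw \<psi> G S"
  proof (rule bij_betw_imageI)
    show "inj_on \<psi> G"
    proof (rule inj_onI)
      fix g g' assume g: "g \<in> G" and g': "g' \<in> G" and eq: "\<psi> g = \<psi> g'"
      show "g = g'"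
      proof (rule PiE_ext[OF g[unfolded G_def] g'[unfolded G_def]])
        fix p assume p: "p \<in> P"
        have le: "g p \<le> r" "g' p \<le> r" using g g' p by (auto simp: G_def)
        have iff: "g p = Suc i \<longleftrightarrow> g' p = Suc i" if "i < r" for i
          using dvd_psi[OF p that, of g] dvd_psi[OF p that, of g'] eq by simp
        show "g p = g' p"
        proof (cases "g p")
          case 0
          show ?thesis
          proof (cases "g' p")
            case (Suc j) then show ?thesis using iff[of j] le by auto
          qed (simp add: 0)
        next
          case (Suc j) then show ?thesis using iff[of j] le by auto
        qed
      qed
    qed
  next
    show "\<psi> ` G = S"
    proof (rule set_eqI, rule iffI)
      fix ns assume "ns \<in> \<psi> ` G"
      then obtain g where g: "g \<in> G" and ns: "ns = \<psi> g" by (rule imageE)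
      have sub: "{p\<in>P. g p \<noteq> 0} \<subseteq> P" by auto
      have "\<Prod>{p\<in>P. g p \<noteq> 0} dvd \<Prod>P"
        using finP sub by (rule prod_dvd_prod_subset)
      then have "\<Prod>{p\<in>P. g p \<noteq> 0} dvd k" using PdvdK by (rule dvd_trans)
      moreover have "(\<Prod>i<r. ns i) = \<Prod>{p\<in>P. g p \<noteq> 0}" using prod_psi[OF g] ns by simp
      ultimately have d1: "(\<Prod>i<r. ns i) dvd k" by simp
      have sq: "squarefree (\<Prod>i<r. ns i)" using prod_psi[OF g] ns primeP finP
        by (auto intro!: squarefree_prod_coprime simp: primes_coprime squarefree_prime)
      have "ns \<in> Pi\<^sub>E {..<r} (\<lambda>_. {1..N})"
      proof -
        have "\<psi> g i \<in> {1..N}" if i: "i < r" for i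
        proof -
          have "\<Prod>{p\<in>P. g p = Suc i} dvd \<Prod>P"
            using finP by (rule prod_dvd_prod_subset) auto
          then have "\<psi> g i dvd k" using i PdvdK dvd_trans by (auto simp: \<psi>_def)
          moreover have "\<psi> g i \<noteq> 0" using i finP primeP by (auto simp: \<psi>_def)
          ultimately show ?thesis using k by (auto dest: dvd_imp_le)
        qed
        then show ?thesis using ns by (auto simp: \<psi>_def)
      qed
      then show "ns \<in> S" using d1 sq by (simp add: S_def)
    next
      fix ns assume "ns \<in> S"
      then have ns: "ns \<in> Pi\<^sub>E {..<r} (\<lambda>_. {1..N})" and d: "(\<Prod>i<r. ns i) dvd k"
        and sq: "squarefree (\<Prod>i<r. ns i)" by (auto simp: S_def)
      define g where "g = (\<lambda>p\<in>P. if \<exists>i<r. p dvd ns i then Suc (LEAST i. p dvd ns i) else 0)"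
      have gG: "g \<in> G"
      proof -
        have lt: "(LEAST i. p dvd ns i) < r" if "\<exists>i<r. p dvd ns i" for p
        proof -
          from that obtain i where "i<r" "p dvd ns i" by blast
          then show ?thesis using Least_le[of "\<lambda>i. p dvd ns i" i] by simp
        qed
        have "(if \<exists>i<r. p dvd ns i then Suc (LEAST i. p dvd ns i) else 0) \<in> {0..r}" for p
          using lt[of p] by (simp add: Suc_le_eq)
        then show ?thesis unfolding G_def g_def by (simp add: restrict_PiE_iff)
      qed
      have "\<psi> g i = ns i" if i: "i < r" for i
      proof -
        have "ns i \<in> {1..N}" using ns i by (auto simp: PiE_iff)
        then have nsi1: "ns i > 0" by simp
        have nsi2: "ns i dvd (\<Prod>i<r. ns i)" using i by (intro dvd_prodI) auto
        note nsi = nsi1 nsi2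
        have sqi: "squarefree (ns i)" using squarefree_mono[OF nsi(2) sq] .
        have "prime_factors (ns i) = {p\<in>P. g p = Suc i}"
        proof (rule set_eqI, rule iffI)
          fix p assume p: "p \<in> prime_factors (ns i)"
          then have pp: "prime p" "p dvd ns i" using nsi by (auto simp: prime_factors_dvd)
          then have "p dvd k" using dvd_trans[OF pp(2) dvd_trans[OF nsi(2) d]] by simp
          then have pP: "p \<in> P" using pp k by (auto simp: P_def prime_factors_dvd)
          have ex: "\<exists>i<r. p dvd ns i" using pp(2) i by (intro exI[of _ i]) simp
          have L: "(LEAST j. p dvd ns j) = i"
          proof (rule Least_equality)
            show "p dvd ns i" by (rule pp(2))
            fix y assume y: "p dvd ns y"
            show "i \<le> y"
            proof (rule ccontr)
              assume "\<not> i \<le> y"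
              then show False using unique_index[OF sq _ i _ pp(1) y pp(2)] i by simp
            qed
          qed
          show "p \<in> {p\<in>P. g p = Suc i}" using pP ex L by (simp add: g_def)
        next
          fix p assume p: "p \<in> {p\<in>P. g p = Suc i}"
          then have pP: "p \<in> P" and ex: "\<exists>i<r. p dvd ns i"
            and L: "(LEAST j. p dvd ns j) = i"
          proof -
            have pP: "p \<in> P" and gp: "g p = Suc i" using p by auto
            then have gp': "(if \<exists>i<r. p dvd ns i then Suc (LEAST i. p dvd ns i) else 0) = Suc i"
              by (simp add: g_def)
            show "p \<in> P" "\<exists>i<r. p dvd ns i" "(LEAST j. p dvd ns j) = i"
              using pP gp' by (cases "\<exists>i<r. p dvd ns i"; simp)+
          qed
          have "p dvd ns (LEAST j. p dvd ns j)" using ex LeastI_ex[of "\<lambda>j. p dvd ns j"] by blast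
          then show "p \<in> prime_factors (ns i)" using L pP primeP nsi
            by (auto simp: prime_factors_dvd)
        qed
        then show ?thesis using squarefree_prod_pf[OF sqi nsi(1)] i by (simp add: \<psi>_def)
      qed
      then have "\<psi> g = ns" using ns by (intro PiE_ext[of _ "{..<r}" "\<lambda>_. {1..N}"]) (auto simp: \<psi>_def)
      then show "ns \<in> \<psi> ` G" using gG by blast
    qed
  qed
  have "(\<Sum>ns \<in> {ns \<in> Pi\<^sub>E {..<r} (\<lambda>_. {1..N}). (\<Prod>i<r. ns i) dvd k}. moebius (\<Prod>i<r. ns i))
        = (\<Sum>ns \<in> S. moebius (\<Prod>i<r. ns i))"
  proof (rule sum.mono_neutral_right)
    show "finite {ns \<in> Pi\<^sub>E {..<r} (\<lambda>_. {1..N}). (\<Prod>i<r. ns i) dvd k}"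
      by (rule finite_subset[OF _ finite_PiE[of "{..<r}" "\<lambda>_. {1..N}"]]) blast+
    show "S \<subseteq> {ns \<in> Pi\<^sub>E {..<r} (\<lambda>_. {1..N}). (\<Prod>i<r. ns i) dvd k}"
      unfolding S_def by blast
    show "\<forall>ns\<in>{ns \<in> Pi\<^sub>E {..<r} (\<lambda>_. {1..N}). (\<Prod>i<r. ns i) dvd k} - S. moebius (\<Prod>i<r. ns i) = 0"
    proof
      fix ns assume "ns \<in> {ns \<in> Pi\<^sub>E {..<r} (\<lambda>_. {1..N}). (\<Prod>i<r. ns i) dvd k} - S"
      then have "\<not> squarefree (\<Prod>i<r. ns i)" unfolding S_def by blast
      then show "moebius (\<Prod>i<r. ns i) = 0" by (simp add: moebius_def)
    qed
  qed
  also have "\<dots> = (\<Sum>g \<in> G. moebius (\<Prod>i<r. \<psi> g i))"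
    using sum.reindex_bij_betw[OF bij, of "\<lambda>ns. moebius (\<Prod>i<r. ns i)"] by simp
  also have "\<dots> = (\<Sum>g \<in> G. \<Prod>p\<in>P. w (g p))"
  proof (rule sum.cong[OF refl])
    fix g assume g: "g \<in> G"
    have "moebius (\<Prod>i<r. \<psi> g i) = (-1) ^ card {p\<in>P. g p \<noteq> 0}"
      using prod_psi[OF g] moebius_prod_primes[of "{p\<in>P. g p \<noteq> 0}"] finP primeP by simp
    also have "\<dots> = (\<Prod>p\<in>P. w (g p))"
    proof -
      have e: "P \<inter> - {p. g p = 0} = {p\<in>P. g p \<noteq> 0}" by auto
      have "(\<Prod>p\<in>P. w (g p)) = (\<Prod>p\<in>P. if g p = 0 then 1 else -1)" by (simp add: w_def)
      also have "\<dots> = (-1) ^ card (P \<inter> - {p. g p = 0})" by (simp add: prod.If_cases finP)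
      finally show ?thesis using e by simp
    qed
    finally show "moebius (\<Prod>i<r. \<psi> g i) = (\<Prod>p\<in>P. w (g p))" .
  qed
  also have "\<dots> = (\<Prod>p\<in>P. \<Sum>j\<in>{0..r}. w j)"
    unfolding G_def by (rule prod_sum_PiE[symmetric]) (auto simp: finP)
  also have "(\<Sum>j\<in>{0..r}. w j) = 1 - int r"
  proof -
    have "(\<Sum>j\<in>{0..r}. w j) = w 0 + (\<Sum>j\<in>{Suc 0..r}. w j)" by (rule sum.atLeast_Suc_atMost) simp
    also have "(\<Sum>j\<in>{Suc 0..r}. w j) = (\<Sum>j\<in>{Suc 0..r}. -1)" by (rule sum.cong) (auto simp: w_def)
    finally show ?thesis by (simp add: w_def)
  qed
  finally show ?thesis by (simp add: omega_def P_def)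
qed



theorem theorem1p1:
  fixes r :: nat and x :: real
  assumes "r \<ge> 2" and "x \<ge> 1"
  shows "(\<Sum>ns \<in> Pi\<^sub>E {..<r} (\<lambda>_. {1..nat \<lfloor>x\<rfloor>}).
            moebius (\<Prod>i<r. ns i) * \<lfloor>x / real (\<Prod>i<r. ns i)\<rfloor>)
       = (\<Sum>n \<in> {1..nat \<lfloor>x\<rfloor>}. (1 - int r) ^ omega n)"
proof -
  define N where "N = nat \<lfloor>x\<rfloor>"
  define A where "A = Pi\<^sub>E {..<r} (\<lambda>_. {1..N})"
  have finA: "finite A" unfolding A_def by (rule finite_PiE) auto
  have "(\<Sum>ns \<in> A. moebius (\<Prod>i<r. ns i) * \<lfloor>x / real (\<Prod>i<r. ns i)\<rfloor>)
      = (\<Sum>ns \<in> A. \<Sum>k\<in>{1..N}. if (\<Prod>i<r. ns i) dvd k then moebius (\<Prod>i<r. ns i) else 0)"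
  proof (rule sum.cong[OF refl])
    fix ns assume ns: "ns \<in> A"
    have "(\<Prod>i<r. ns i) \<ge> 1"
      using ns by (intro prod_ge_1) (auto simp: A_def PiE_iff)
    then have "\<lfloor>x / real (\<Prod>i<r. ns i)\<rfloor> = int (card {k\<in>{1..N}. (\<Prod>i<r. ns i) dvd k})"
      using floor_div_nat[of x "\<Prod>i<r. ns i"] card_multiples[of "\<Prod>i<r. ns i" N] assms
      by (simp add: N_def)
    also have "\<dots> = (\<Sum>k\<in>{1..N}. if (\<Prod>i<r. ns i) dvd k then 1 else 0)"
      by (simp add: sum.inter_filter[symmetric])
    finally show "moebius (\<Prod>i<r. ns i) * \<lfloor>x / real (\<Prod>i<r. ns i)\<rfloor>
       = (\<Sum>k\<in>{1..N}. if (\<Prod>i<r. ns i) dvd k then moebius (\<Prod>i<r. ns i) else 0)"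
      by (simp add: sum_distrib_left if_distrib cong: if_cong)
  qed
  also have "\<dots> = (\<Sum>k\<in>{1..N}. \<Sum>ns \<in> A. if (\<Prod>i<r. ns i) dvd k then moebius (\<Prod>i<r. ns i) else 0)"
    by (rule sum.swap)
  also have "\<dots> = (\<Sum>k\<in>{1..N}. (1 - int r) ^ omega k)"
  proof (rule sum.cong[OF refl])
    fix k assume k: "k \<in> {1..N}"
    have "(\<Sum>ns \<in> A. if (\<Prod>i<r. ns i) dvd k then moebius (\<Prod>i<r. ns i) else 0)
        = (\<Sum>ns \<in> {ns\<in>A. (\<Prod>i<r. ns i) dvd k}. moebius (\<Prod>i<r. ns i))"
      using finA by (simp add: sum.inter_filter)
    also have "\<dots> = (1 - int r) ^ omega k"
      using inner_sum[of k N r] k by (simp add: A_def)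
    finally show "(\<Sum>ns \<in> A. if (\<Prod>i<r. ns i) dvd k then moebius (\<Prod>i<r. ns i) else 0)
        = (1 - int r) ^ omega k" .
  qed
  finally show ?thesis by (simp add: A_def N_def)
qed

end
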